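(* Let $G$ be a graph on $d+2$ vertices with adjacency matrix $A_G$ having eigenvalues $\lambda_1\geq\lambda_2\geq\dots\geq\lambda_{d+2}$, and let $k>1$ with $\overline{B_G}=\frac{1}{k^2-1}I-A_G$. Suppose that $w^T\overline{B_G}w\geq 0$ for all $w\in\mathbf{1}^\perp$, that there exist a nonzero $w\in\mathbf{1}^\perp$ and a real $\gamma$ with $\overline{B_G}w=\gamma\mathbf{1}$, and that $\det(\overline{B_G})=0$. If $\lambda_1>\lambda_2$, then every eigenvector of $A_G$ with eigenvalue $\lambda_2$ lies in $\mathbf{1}^\perp$. If $\lambda_1=\lambda_2$, then a basis of the $\lambda_2$-eigenspace of $A_G$ can be chosen so that all but one of its vectors lie in $\mathbf{1}^\perp$.
   Context: Graphs are finite and simple; $\mathbf{1}$ is the all-ones vector and $\mathbf{1}^\perp$ its orthogonal complement. *)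

theory Defs
  imports "HOL-Analysis.Analysis" "HOL-Computational_Algebra.Polynomial"
begin

definition simple_graph :: "('n::finite \<Rightarrow> 'n \<Rightarrow> bool) \<Rightarrow> bool" where
  "simple_graph E \<longleftrightarrow> (\<forall>i j. E i j \<longrightarrow> E j i) \<and> (\<forall>i. \<not> E i i)"

definition adjacency_matrix :: "('n::finite \<Rightarrow> 'n \<Rightarrow> bool) \<Rightarrow> real^'n^'n" where
  "adjacency_matrix E = (\<chi> i j. if E i j then 1 else 0)"

definition charpoly :: "real^'n^'n \<Rightarrow> real poly" where
  "charpoly A = det (\<chi> i j. (if i = j then [:0, 1:] else 0) - [:A $ i $ j:])"

text \<open>Eigenvalues counted with (algebraic) multiplicity, in non-increasing order:
  lambda_1 = eigvals_desc A ! 0, lambda_2 = eigvals_desc A ! 1, ...\<close>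
definition eigvals_desc :: "real^'n::finite^'n \<Rightarrow> real list" where
  "eigvals_desc A = (THE ls. length ls = CARD('n) \<and> sorted_wrt (\<ge>) ls \<and>
      charpoly A = (\<Prod>a\<leftarrow>ls. [:- a, 1:]))"

definition Bbar :: "real \<Rightarrow> ('n::finite \<Rightarrow> 'n \<Rightarrow> bool) \<Rightarrow> real^'n^'n" where
  "Bbar k E = (1 / (k\<^sup>2 - 1)) *\<^sub>R mat 1 - adjacency_matrix E"

end

theory Submission
  imports Defs "HOL-Combinatorics.List_Permutation"
begin


lemma sym_mat_inner:
  fixes A :: "real^'n^'n"
  assumes "transpose A = A"
  shows "(A *v x) \<bullet> y = x \<bullet> (A *v y)"
  by (metis assms dot_lmul_matrix inner_commute transpose_transpose vector_transpose_matrix)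

lemma max_eigvec:
  fixes A :: "real^'n^'n" and S :: "(real^'n) set"
  assumes symA: "transpose A = A" and sS: "subspace S" and ne: "S \<noteq> {0}"
    and inv: "\<And>x. x \<in> S \<Longrightarrow> A *v x \<in> S"
  shows "\<exists>x\<in>S. norm x = 1 \<and> (\<exists>a. A *v x = a *\<^sub>R x)"
proof -
  let ?K = "S \<inter> sphere 0 1"
  have cK: "compact ?K"
    by (metis Int_commute closed_subspace compact_Int_closed compact_sphere sS)
  obtain y where y: "y \<in> S" "y \<noteq> 0" using ne sS subspace_0 by blast
  have "y /\<^sub>R norm y \<in> ?K" using y sS by (simp add: subspace_scale)
  then have neK: "?K \<noteq> {}" by blast
  have cont: "continuous_on ?K (\<lambda>x. x \<bullet> (A *v x))"
    by (intro continuous_intros linear_continuous_on matrix_vector_mul_linear bounded_linear_inner_right)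
  obtain x where xK: "x \<in> ?K" and xmax: "\<And>z. z \<in> ?K \<Longrightarrow> z \<bullet> (A *v z) \<le> x \<bullet> (A *v x)"
    using continuous_attains_sup[OF cK neK cont] by blast
  define M where "M = x \<bullet> (A *v x)"
  have bound: "z \<bullet> (A *v z) \<le> M * (z \<bullet> z)" if "z \<in> S" for z
  proof (cases "z = 0")
    case True then show ?thesis by simp
  next
    case False
    have "z /\<^sub>R norm z \<in> ?K" using that False sS by (simp add: subspace_scale)
    then have "(z /\<^sub>R norm z) \<bullet> (A *v (z /\<^sub>R norm z)) \<le> M" using xmax M_def by blast
    moreover have "(z /\<^sub>R norm z) \<bullet> (A *v (z /\<^sub>R norm z)) = (z \<bullet> (A *v z)) / (norm z * norm z)"
      by (simp add: matrix_vector_mult_scaleR divide_inverse)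
    ultimately have "(z \<bullet> (A *v z)) / (norm z * norm z) \<le> M" by simp
    moreover have "norm z * norm z = z \<bullet> z" by (simp add: power2_eq_square[symmetric] power2_norm_eq_inner)
    moreover have "z \<bullet> z > 0" using False by simp
    ultimately show ?thesis by (simp add: divide_le_eq mult.commute)
  qed
  have xS: "x \<in> S" and nx: "norm x = 1" using xK by auto
  define z where "z = A *v x - M *\<^sub>R x"
  have zS: "z \<in> S" unfolding z_def using inv xS sS by (simp add: subspace_diff subspace_scale)
  have xx: "x \<bullet> x = 1" using nx by (simp add: norm_eq_1)
  have xz: "x \<bullet> z = 0" unfolding z_def M_def using xx by (simp add: inner_diff_right)
  have Ax: "A *v x = z + M *\<^sub>R x" by (simp add: z_def)
  have zAx: "z \<bullet> (A *v x) = z \<bullet> z"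
    unfolding Ax using xz by (simp add: inner_add_right inner_commute)
  have xAz: "x \<bullet> (A *v z) = z \<bullet> z"
    using zAx sym_mat_inner[OF symA, of z x] by (simp add: inner_commute)
  define K where "K = M * (z \<bullet> z) - z \<bullet> (A *v z)"
  have ineq: "2 * t * (z \<bullet> z) \<le> t^2 * K" for t :: real
  proof -
    have "(x + t *\<^sub>R z) \<in> S" using xS zS sS by (simp add: subspace_add subspace_scale)
    then have h1: "(x + t *\<^sub>R z) \<bullet> (A *v (x + t *\<^sub>R z)) \<le> M * ((x + t *\<^sub>R z) \<bullet> (x + t *\<^sub>R z))"
      by (rule bound)
    have h2: "(x + t *\<^sub>R z) \<bullet> (A *v (x + t *\<^sub>R z)) = M + 2 * t * (z \<bullet> z) + t^2 * (z \<bullet> (A *v z))"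
      using zAx xAz M_def
      by (simp add: matrix_vector_right_distrib matrix_vector_mult_scaleR inner_add_left inner_add_right power2_eq_square algebra_simps)
    have h3: "(x + t *\<^sub>R z) \<bullet> (x + t *\<^sub>R z) = 1 + t^2 * (z \<bullet> z)"
      using xx xz by (simp add: inner_add_left inner_add_right power2_eq_square inner_commute algebra_simps)
    have "M + 2 * t * (z \<bullet> z) + t^2 * (z \<bullet> (A *v z)) \<le> M * (1 + t^2 * (z \<bullet> z))"
      using h1 unfolding h2 h3 .
    then show ?thesis unfolding K_def by (simp add: algebra_simps)
  qed
  have "z \<bullet> z \<le> 0"
  proof (cases "K \<le> 0")
    case True
    then show ?thesis using ineq[of 1] by simp
  next
    case False
    have "2 * (z \<bullet> z / K) * (z \<bullet> z) \<le> (z \<bullet> z / K)^2 * K" by (rule ineq)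
    then have "2 * (z \<bullet> z)^2 / K \<le> (z \<bullet> z)^2 / K"
      using False by (simp add: power2_eq_square field_simps)
    then have "(z \<bullet> z)^2 \<le> 0" using False by (simp add: divide_le_cancel)
    then show ?thesis by simp
  qed
  then have "z = 0" by (metis inner_eq_zero_iff inner_ge_zero order_antisym)
  then have "A *v x = M *\<^sub>R x" unfolding z_def by simp
  then show ?thesis using xS nx by blast
qed



lemma orth_eigvecs:
  fixes A :: "real^'n^'n"
  assumes symA: "transpose A = A"
  shows "m \<le> CARD('n) \<Longrightarrow> \<exists>F. finite F \<and> card F = m \<and> (\<forall>f\<in>F. norm f = 1 \<and> (\<exists>a. A *v f = a *\<^sub>R f)) \<and> pairwise orthogonal F"
proof (induction m)
  case 0
  then show ?case by (intro exI[of _ "{}"]) auto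
next
  case (Suc m)
  then obtain F where F: "finite F" "card F = m" "\<forall>f\<in>F. norm f = 1 \<and> (\<exists>a. A *v f = a *\<^sub>R f)"
    "pairwise orthogonal F" by auto
  have "dim F \<le> card F" using F(1) by (simp add: dim_le_card')
  then have "dim F < DIM(real^'n)" using Suc.prems F(2) by simp
  then obtain y where y: "y \<noteq> 0" "\<And>z. z \<in> span F \<Longrightarrow> orthogonal y z"
    using orthogonal_to_subspace_exists by blast
  define S where "S = {x. \<forall>f\<in>F. orthogonal f x}"
  have sS: "subspace S" unfolding S_def by (rule subspace_orthogonal_to_vectors)
  have yS: "y \<in> S" unfolding S_def using y(2) span_base orthogonal_commute by blast
  have ne: "S \<noteq> {0}" using yS y(1) by blast
  have inv: "A *v x \<in> S" if "x \<in> S" for x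
  proof -
    have "orthogonal f (A *v x)" if "f \<in> F" for f
    proof -
      obtain a where a: "A *v f = a *\<^sub>R f" using F(3) \<open>f \<in> F\<close> by blast
      have "f \<bullet> (A *v x) = (A *v f) \<bullet> x" using sym_mat_inner[OF symA] by simp
      also have "\<dots> = a * (f \<bullet> x)" using a by simp
      also have "\<dots> = 0" using \<open>x \<in> S\<close> \<open>f \<in> F\<close> unfolding S_def orthogonal_def by simp
      finally show ?thesis unfolding orthogonal_def .
    qed
    then show ?thesis unfolding S_def by blast
  qed
  obtain x where x: "x \<in> S" "norm x = 1" "\<exists>a. A *v x = a *\<^sub>R x"
    using max_eigvec[OF symA sS ne inv] by blast
  have xF: "x \<notin> F"
  proof
    assume "x \<in> F"
    then have "orthogonal x x" using x(1) unfolding S_def by blast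
    then show False using x(2) by (simp add: orthogonal_def)
  qed
  show ?case
  proof (intro exI[of _ "insert x F"] conjI)
    show "finite (insert x F)" using F(1) by simp
    show "card (insert x F) = Suc m" using F xF by simp
    show "\<forall>f\<in>insert x F. norm f = 1 \<and> (\<exists>a. A *v f = a *\<^sub>R f)" using F(3) x by blast
    show "pairwise orthogonal (insert x F)"
      using F(4) x(1) unfolding S_def pairwise_insert
      by (auto simp: orthogonal_commute)
  qed
qed

lemma spectral:
  fixes A :: "real^'n^'n"
  assumes symA: "transpose A = A"
  obtains g :: "'n \<Rightarrow> real^'n" and \<alpha> where "\<And>i. norm (g i) = 1" "\<And>i j. i \<noteq> j \<Longrightarrow> g i \<bullet> g j = 0"
    "\<And>i. A *v g i = \<alpha> i *\<^sub>R g i"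
proof -
  obtain F where F: "finite F" "card F = CARD('n)" "\<forall>f\<in>F. norm f = 1 \<and> (\<exists>a. A *v f = a *\<^sub>R f)"
    "pairwise orthogonal F" using orth_eigvecs[OF symA, of "CARD('n)"] by auto
  obtain h where h: "bij_betw h (UNIV::'n set) F"
    using finite_same_card_bij[of "UNIV::'n set" F] F by auto
  have hF: "h i \<in> F" for i using h bij_betwE by blast
  have hinj: "h i \<noteq> h j" if "i \<noteq> j" for i j using h that unfolding bij_betw_def inj_on_def by blast
  define \<alpha> where "\<alpha> i = (SOME a. A *v h i = a *\<^sub>R h i)" for i
  show ?thesis
  proof
    show "norm (h i) = 1" for i using hF F(3) by blast
    show "h i \<bullet> h j = 0" if "i \<noteq> j" for i j
      using F(4) hF hinj[OF that] unfolding pairwise_def orthogonal_def by blast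
    show "A *v h i = \<alpha> i *\<^sub>R h i" for i
      unfolding \<alpha>_def using hF F(3) by (metis (mono_tags, lifting) someI_ex)
  qed
qed



lemma poly_charpoly:
  "poly (charpoly A) x = det (\<chi> i j. (if i = j then x else 0) - A$i$j)"
  unfolding charpoly_def det_def
  by (simp add: poly_sum poly_prod of_int_poly if_distrib[of "\<lambda>p. poly p x"] cong: if_cong)

lemma det_eig:
  fixes A :: "real^'n^'n" and g :: "'n \<Rightarrow> real^'n"
  assumes n1: "\<And>i. norm (g i) = 1" and orth: "\<And>i j. i \<noteq> j \<Longrightarrow> g i \<bullet> g j = 0"
    and eig: "\<And>i. A *v g i = \<alpha> i *\<^sub>R g i"
  shows "det (\<chi> i j. (if i = j then x else 0) - A$i$j) = (\<Prod>i\<in>UNIV. x - \<alpha> i)"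
proof -
  define U :: "real^'n^'n" where "U = (\<chi> i. g i)"
  define M :: "real^'n^'n" where "M = (\<chi> i j. (if i = j then x else 0) - A$i$j)"
  have gg: "g i \<bullet> g j = (if i = j then 1 else 0)" for i j
    using n1[of i] orth[of i j] by (auto simp: norm_eq_1)
  have Av: "(\<Sum>l\<in>UNIV. A$k$l * g j $ l) = \<alpha> j * g j $ k" for k j
  proof -
    have "(A *v g j) $ k = \<alpha> j * g j $ k" using eig[of j] by simp
    then show ?thesis by (simp add: matrix_vector_mult_def)
  qed
  have col: "(M ** transpose U) $ k $ j = (x - \<alpha> j) * (g j $ k)" for k j
  proof -
    have dl: "(\<Sum>l\<in>UNIV. (if k = l then x else 0) * g j $ l) = x * g j $ k"
      by (simp add: if_distrib[of "\<lambda>a. a * g j $ _"] cong: if_cong)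
    have "(M ** transpose U) $ k $ j = (\<Sum>l\<in>UNIV. ((if k = l then x else 0) - A$k$l) * g j $ l)"
      by (simp add: matrix_matrix_mult_def transpose_def U_def M_def)
    also have "\<dots> = (\<Sum>l\<in>UNIV. (if k = l then x else 0) * g j $ l) - (\<Sum>l\<in>UNIV. A$k$l * g j $ l)"
      by (simp only: left_diff_distrib sum_subtractf)
    also have "\<dots> = x * g j $ k - \<alpha> j * g j $ k" using Av dl by simp
    finally show ?thesis by (simp add: algebra_simps)
  qed
  have D: "U ** (M ** transpose U) = (\<chi> i j. if i = j then x - \<alpha> i else 0)"
  proof -
    have "(U ** (M ** transpose U)) $ i $ j = (if i = j then x - \<alpha> i else 0)" for i j
    proof -
      have "(U ** (M ** transpose U)) $ i $ j = (\<Sum>k\<in>UNIV. g i $ k * ((x - \<alpha> j) * g j $ k))"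
        unfolding matrix_matrix_mult_def[of U "M ** transpose U"] by (simp add: col, simp add: U_def)
      also have "\<dots> = (x - \<alpha> j) * (g i \<bullet> g j)"
        by (simp add: inner_vec_def sum_distrib_left algebra_simps)
      finally show ?thesis using gg by simp
    qed
    then show ?thesis by (simp add: vec_eq_iff)
  qed
  have UU: "U ** transpose U = mat 1"
    by (simp add: matrix_mult_transpose_dot_row row_def U_def gg vec_eq_iff mat_def)
  have dU: "det U * det U = 1"
    using arg_cong[OF UU, of det] by (simp add: det_mul det_I)
  have "det (U ** (M ** transpose U)) = det M * (det U * det U)"
    by (simp add: det_mul algebra_simps)
  then have "det M = det (\<chi> i j. if i = j then x - \<alpha> i else (0::real))"
    using D dU by simp
  also have "\<dots> = (\<Prod>i\<in>UNIV. x - \<alpha> i)"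
    by (subst det_diagonal) auto
  finally show ?thesis unfolding M_def .
qed

lemma charpoly_eig:
  fixes A :: "real^'n^'n" and g :: "'n \<Rightarrow> real^'n"
  assumes n1: "\<And>i. norm (g i) = 1" and orth: "\<And>i j. i \<noteq> j \<Longrightarrow> g i \<bullet> g j = 0"
    and eig: "\<And>i. A *v g i = \<alpha> i *\<^sub>R g i"
  shows "charpoly A = (\<Prod>i\<in>UNIV. [:- \<alpha> i, 1:])"
proof -
  have "poly (charpoly A) x = poly (\<Prod>i\<in>UNIV. [:- \<alpha> i, 1:]) x" for x
    using det_eig[OF assms, where x=x] by (simp add: poly_charpoly poly_prod)
  then show ?thesis using poly_eq_poly_eq_iff by blast
qed



lemma lin_nonzero: "[:- (x::real), 1:] \<noteq> 0" by simp

lemma order_prod_lin: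
  "order a (\<Prod>x\<leftarrow>ls. [:- (x::real), 1:]) = count (mset ls) a \<and> (\<Prod>x\<leftarrow>ls. [:- (x::real), 1:]) \<noteq> 0"
proof (induction ls)
  case Nil
  then show ?case by simp
next
  case (Cons x ls)
  have o1: "order a [:- x, 1:] = (if a = x then 1 else 0)"
  proof (cases "a = x")
    case True
    then show ?thesis using order_power_n_n[of a 1] by simp
  next
    case False
    then have "order a [:- x, 1:] = 0" by (intro order_0I) simp
    then show ?thesis using False by simp
  qed
  have nz: "[:- x, 1:] * (\<Prod>x\<leftarrow>ls. [:- x, 1:]) \<noteq> 0" by (metis Cons.IH lin_nonzero mult_eq_0_iff)
  have eq: "(\<Prod>y\<leftarrow>x#ls. [:- y, 1:]) = [:- x, 1:] * (\<Prod>y\<leftarrow>ls. [:- y, 1:])" by simp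
  have oo: "order a ([:- x, 1:] * (\<Prod>y\<leftarrow>ls. [:- y, 1:])) = (if a = x then 1 else 0) + count (mset ls) a"
    using order_mult[OF nz, of a] o1 Cons.IH by argo
  have "count (mset (x#ls)) a = (if a = x then 1 else 0) + count (mset ls) a" by simp
  then show ?case unfolding eq using oo nz by argo
qed

lemma mset_eq_prod:
  assumes "mset l1 = mset l2"
  shows "(\<Prod>x\<leftarrow>l1. f x) = (\<Prod>x\<leftarrow>l2. (f x :: 'a::comm_monoid_mult))"
  by (metis assms mset_map prod_mset_prod_list)

lemma sorted_desc_unique:
  fixes l1 l2 :: "real list"
  assumes "sorted_wrt (\<ge>) l1" "sorted_wrt (\<ge>) l2" "mset l1 = mset l2"
  shows "l1 = l2"
proof -
  have s1: "sorted (rev l1)" and s2: "sorted (rev l2)" using assms(1,2) by (simp_all add: sorted_wrt_rev)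
  have "sort (rev l2) = rev l1" using properties_for_sort[of "rev l1" "rev l2"] s1 assms(3) by simp
  moreover have "sort (rev l2) = rev l2" using s2 by (simp add: sorted_sort_id)
  ultimately show ?thesis by simp
qed

lemma eigvals_desc_char:
  fixes A :: "real^'n^'n" and xs :: "'n list" and \<alpha> :: "'n \<Rightarrow> real"
  assumes cp: "charpoly A = (\<Prod>i\<in>UNIV. [:- \<alpha> i, 1:])" and xs: "distinct xs" "set xs = UNIV"
  shows "eigvals_desc A = rev (sort (map \<alpha> xs))"
  unfolding eigvals_desc_def
proof (rule the_equality)
  let ?L = "rev (sort (map \<alpha> xs))"
  have cpl: "charpoly A = (\<Prod>x\<leftarrow>map \<alpha> xs. [:- x, 1:])"
    using cp xs prod.distinct_set_conv_list[of xs "\<lambda>i. [:- \<alpha> i, 1:]"] by (simp add: o_def)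
  have mL: "mset ?L = mset (map \<alpha> xs)" by simp
  show "length ?L = CARD('n) \<and> sorted_wrt (\<ge>) ?L \<and> charpoly A = (\<Prod>a\<leftarrow>?L. [:- a, 1:])"
  proof (intro conjI)
    show "length ?L = CARD('n)" using xs by (simp add: distinct_card[symmetric])
    show "sorted_wrt (\<ge>) ?L" by (simp add: sorted_wrt_rev)
    show "charpoly A = (\<Prod>a\<leftarrow>?L. [:- a, 1:])" unfolding cpl by (rule mset_eq_prod[OF mL, symmetric])
  qed
  fix ls
  assume h: "length ls = CARD('n) \<and> sorted_wrt (\<ge>) ls \<and> charpoly A = (\<Prod>a\<leftarrow>ls. [:- a, 1:])"
  have "count (mset ls) a = count (mset (map \<alpha> xs)) a" for a
    using order_prod_lin[of a ls] order_prod_lin[of a "map \<alpha> xs"] h cpl by simp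
  then have "mset ls = mset ?L" by (simp add: multiset_eq_iff)
  then show "ls = ?L" using h sorted_desc_unique[of ls ?L] by (simp add: sorted_wrt_rev)
qed



context
  fixes A :: "real^'n^'n" and g :: "'n \<Rightarrow> real^'n" and \<alpha> :: "'n \<Rightarrow> real"
  assumes symA: "transpose A = A" and n1: "\<And>i. norm (g i) = 1"
    and orth: "\<And>i j. i \<noteq> j \<Longrightarrow> g i \<bullet> g j = 0" and eig: "\<And>i. A *v g i = \<alpha> i *\<^sub>R g i"
begin

lemma gg: "g i \<bullet> g j = (if i = j then 1 else 0)"
  using n1[of i] orth[of i j] by (auto simp: norm_eq_1)

lemma expand: "x = (\<Sum>i\<in>UNIV. (g i \<bullet> x) *\<^sub>R g i)"
proof -
  define U :: "real^'n^'n" where "U = (\<chi> i. g i)"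
  have UU: "U ** transpose U = mat 1"
    by (simp add: matrix_mult_transpose_dot_row row_def U_def gg vec_eq_iff mat_def)
  then have UU2: "transpose U ** U = mat 1" using matrix_left_right_inverse by blast
  have "x = transpose U *v (U *v x)"
    by (simp add: matrix_vector_mul_assoc UU2)
  also have "\<dots> = (\<Sum>i\<in>UNIV. (g i \<bullet> x) *\<^sub>R g i)"
    by (simp add: vec_eq_iff matrix_vector_mult_def transpose_def U_def inner_vec_def sum_component mult.commute)
  finally show ?thesis .
qed

lemma coeff_eq:
  assumes "\<And>i. g i \<bullet> x = g i \<bullet> y" shows "x = y"
proof -
  have "x = (\<Sum>i\<in>UNIV. (g i \<bullet> x) *\<^sub>R g i)" by (rule expand)
  also have "\<dots> = (\<Sum>i\<in>UNIV. (g i \<bullet> y) *\<^sub>R g i)" using assms by simp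
  also have "\<dots> = y" by (rule expand[symmetric])
  finally show ?thesis .
qed

lemma parseval: "x \<bullet> y = (\<Sum>i\<in>UNIV. (g i \<bullet> x) * (g i \<bullet> y))"
proof -
  have "x \<bullet> y = (\<Sum>i\<in>UNIV. (g i \<bullet> x) *\<^sub>R g i) \<bullet> y" by (rule arg_cong[OF expand[of x], of "\<lambda>z. z \<bullet> y"])
  also have "\<dots> = (\<Sum>i\<in>UNIV. (g i \<bullet> x) * (g i \<bullet> y))" by (simp add: inner_sum_left)
  finally show ?thesis .
qed

lemma coeffA: "g i \<bullet> (A *v x) = \<alpha> i * (g i \<bullet> x)"
  using sym_mat_inner[OF symA, of "g i" x] eig[of i] by simp

lemma quad: "x \<bullet> (A *v x) = (\<Sum>i\<in>UNIV. \<alpha> i * (g i \<bullet> x)^2)"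
  by (simp add: parseval[of x "A *v x"] coeffA power2_eq_square algebra_simps)

lemma norm2: "x \<bullet> x = (\<Sum>i\<in>UNIV. (g i \<bullet> x)^2)"
  by (simp add: parseval[of x x] power2_eq_square)

lemma eigcoef: "A *v v = b *\<^sub>R v \<Longrightarrow> (\<alpha> i - b) * (g i \<bullet> v) = 0"
  using coeffA[of i v] by (auto simp: algebra_simps)

lemma rayleigh_max: "(\<And>i. \<alpha> i \<le> L) \<Longrightarrow> x \<bullet> (A *v x) \<le> L * (x \<bullet> x)"
  unfolding quad norm2 sum_distrib_left
  by (intro sum_mono mult_right_mono) auto

lemma rayleigh_eq:
  assumes le: "\<And>i. \<alpha> i \<le> L" and eq: "x \<bullet> (A *v x) = L * (x \<bullet> x)"
  shows "A *v x = L *\<^sub>R x"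
proof -
  have "(\<Sum>i\<in>UNIV. (L - \<alpha> i) * (g i \<bullet> x)^2) = 0"
    using eq unfolding quad norm2 sum_distrib_left by (simp add: left_diff_distrib sum_subtractf)
  moreover have "\<forall>i\<in>UNIV. (L - \<alpha> i) * (g i \<bullet> x)^2 \<ge> 0" using le by simp
  ultimately have z: "(L - \<alpha> i) * (g i \<bullet> x)^2 = 0" for i
    using sum_nonneg_eq_0_iff[of UNIV "\<lambda>i. (L - \<alpha> i) * (g i \<bullet> x)^2"] by simp
  show ?thesis
  proof (rule coeff_eq)
    fix i
    have "(L - \<alpha> i) * (g i \<bullet> x) = 0" using z[of i] by (simp add: power2_eq_square)
    then show "g i \<bullet> (A *v x) = g i \<bullet> (L *\<^sub>R x)" using coeffA[of i x] by (auto simp: algebra_simps)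
  qed
qed

end



lemma adj_sym: "simple_graph E \<Longrightarrow> transpose (adjacency_matrix E) = adjacency_matrix E"
  unfolding simple_graph_def adjacency_matrix_def transpose_def by (auto simp: vec_eq_iff)

lemma adj_nonneg: "adjacency_matrix E $ i $ j \<ge> 0"
  unfolding adjacency_matrix_def by simp

lemma eig_order:
  fixes xs :: "'n::finite list" and \<alpha> :: "'n \<Rightarrow> real"
  assumes xs: "distinct xs" "set xs = UNIV" and ls: "ls = rev (sort (map \<alpha> xs))" and c2: "CARD('n) \<ge> 2"
  obtains i1 i2 where "i1 \<noteq> i2" "\<alpha> i1 = ls ! 0" "\<alpha> i2 = ls ! 1" "\<And>j. \<alpha> j \<le> ls ! 0"
    "\<And>j. j \<noteq> i1 \<Longrightarrow> \<alpha> j \<le> ls ! 1"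
proof -
  have len: "length xs = CARD('n)" using xs by (metis distinct_card)
  have sw: "sorted_wrt (\<ge>) ls" unfolding ls by (simp add: sorted_wrt_rev)
  have lenls: "length ls = CARD('n)" using ls len by simp
  have "mset ls = mset (map \<alpha> xs)" using ls by simp
  then obtain f where f: "bij_betw f {..<length ls} {..<length (map \<alpha> xs)}"
    "\<And>i. i < length ls \<Longrightarrow> ls ! i = map \<alpha> xs ! (f i)"
    using permutation_Ex_bij by blast
  have f': "bij_betw f {..<CARD('n)} {..<CARD('n)}" using f(1) lenls len by simp
  have fl: "f i < CARD('n)" if "i < CARD('n)" for i using f' that bij_betwE by blast
  have ls_i: "ls ! i = \<alpha> (xs ! f i)" if "i < CARD('n)" for i using f(2) lenls that fl len by simp
  have mono: "ls ! j \<le> ls ! i" if "i \<le> j" "j < CARD('n)" for i j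
    using sw that lenls by (cases "i = j") (auto simp: sorted_wrt_iff_nth_less)
  show ?thesis
  proof
    have "f 0 \<noteq> f 1" using inj_onD[OF bij_betw_imp_inj_on[OF f'], of 0 1] c2 by auto
    then show "xs ! f 0 \<noteq> xs ! f 1" using xs(1) fl c2 len by (simp add: nth_eq_iff_index_eq)
    show "\<alpha> (xs ! f 0) = ls ! 0" using ls_i c2 by simp
    show "\<alpha> (xs ! f 1) = ls ! 1" using ls_i c2 by simp
    fix j
    obtain m where m: "m < CARD('n)" "xs ! m = j" using xs len by (metis UNIV_I in_set_conv_nth)
    have "m \<in> f ` {..<CARD('n)}" using f' m(1) unfolding bij_betw_def by auto
    then obtain m' where m': "m' < CARD('n)" "f m' = m" by auto
    have aj: "\<alpha> j = ls ! m'" using ls_i[OF m'(1)] m m' by simp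
    show "\<alpha> j \<le> ls ! 0" using aj mono[of 0 m'] m' by simp
    assume "j \<noteq> xs ! f 0"
    then have "m' \<noteq> 0" using m m' by metis
    then show "\<alpha> j \<le> ls ! 1" using aj mono[of 1 m'] m' by simp
  qed
qed

lemma perron:
  fixes A :: "real^'n^'n" and g :: "'n \<Rightarrow> real^'n"
  assumes symA: "transpose A = A" and n1: "\<And>i. norm (g i) = 1"
    and orth: "\<And>i j. i \<noteq> j \<Longrightarrow> g i \<bullet> g j = 0" and eig: "\<And>i. A *v g i = \<alpha> i *\<^sub>R g i"
    and nn: "\<And>i j. A $ i $ j \<ge> 0" and top: "\<And>i. \<alpha> i \<le> L" and i1: "\<alpha> i1 = L"
  shows "\<exists>p. A *v p = L *\<^sub>R p \<and> p \<bullet> vec 1 > 0"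
proof -
  define x where "x = g i1"
  define p :: "real^'n" where "p = (\<chi> k. \<bar>x $ k\<bar>)"
  have qf: "y \<bullet> (A *v y) = (\<Sum>k\<in>UNIV. \<Sum>l\<in>UNIV. y $ k * A $ k $ l * y $ l)" for y :: "real^'n"
    by (simp add: inner_vec_def matrix_vector_mult_def sum_distrib_left mult.assoc)
  have xx: "x \<bullet> x = 1" using n1[of i1] unfolding x_def by (simp add: norm_eq_1)
  have xAx: "x \<bullet> (A *v x) = L" using eig[of i1] xx i1 unfolding x_def by simp
  have pp: "p \<bullet> p = 1" using xx unfolding p_def by (simp add: inner_vec_def abs_mult_self_eq)
  have "x \<bullet> (A *v x) \<le> p \<bullet> (A *v p)"
    unfolding qf
  proof (intro sum_mono)
    fix k l
    have "x $ k * A $ k $ l * x $ l \<le> \<bar>x $ k * A $ k $ l * x $ l\<bar>" by simp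
    also have "\<dots> = p $ k * A $ k $ l * p $ l" using nn[of k l] unfolding p_def by (simp add: abs_mult)
    finally show "x $ k * A $ k $ l * x $ l \<le> p $ k * A $ k $ l * p $ l" .
  qed
  moreover have "p \<bullet> (A *v p) \<le> L * (p \<bullet> p)" by (rule rayleigh_max[OF symA n1 orth eig top])
  ultimately have eqp: "p \<bullet> (A *v p) = L * (p \<bullet> p)" using xAx pp by simp
  have Ap: "A *v p = L *\<^sub>R p" by (rule rayleigh_eq[OF symA n1 orth eig top eqp])
  have "p \<bullet> vec 1 = (\<Sum>k\<in>UNIV. \<bar>x $ k\<bar>)" unfolding p_def by (simp add: inner_vec_def)
  moreover have "(\<Sum>k\<in>UNIV. \<bar>x $ k\<bar>) > 0"
  proof (rule ccontr)
    assume "\<not> ?thesis"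
    then have "(\<Sum>k\<in>UNIV. \<bar>x $ k\<bar>) = 0" by (meson not_less order_antisym sum_nonneg abs_ge_zero)
    then have "\<forall>k. x $ k = 0" using sum_nonneg_eq_0_iff[of UNIV "\<lambda>k. \<bar>x $ k\<bar>"] by simp
    then have "x = 0" by (simp add: vec_eq_iff)
    then show False using xx by simp
  qed
  ultimately show ?thesis using Ap by auto
qed



theorem corollary4p5:
  fixes E :: "'n::finite \<Rightarrow> 'n \<Rightarrow> bool" and d :: nat and k :: real
  assumes "simple_graph E"
    and "CARD('n) = d + 2"
    and "k > 1"
    and "\<forall>w. w \<bullet> vec 1 = 0 \<longrightarrow> w \<bullet> (Bbar k E *v w) \<ge> 0"
    and "\<exists>w \<gamma>. w \<noteq> 0 \<and> w \<bullet> vec 1 = 0 \<and> Bbar k E *v w = \<gamma> *\<^sub>R vec 1"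
    and "det (Bbar k E) = 0"
  shows "(eigvals_desc (adjacency_matrix E) ! 0 > eigvals_desc (adjacency_matrix E) ! 1 \<longrightarrow>
           (\<forall>v. adjacency_matrix E *v v = (eigvals_desc (adjacency_matrix E) ! 1) *\<^sub>R v
                 \<longrightarrow> v \<bullet> vec 1 = 0))
       \<and> (eigvals_desc (adjacency_matrix E) ! 0 = eigvals_desc (adjacency_matrix E) ! 1 \<longrightarrow>
           (\<exists>B. independent B \<and>
                span B = {v. adjacency_matrix E *v v = (eigvals_desc (adjacency_matrix E) ! 1) *\<^sub>R v} \<and>
                card {b \<in> B. b \<bullet> vec 1 \<noteq> 0} = 1))"
proof -
  define A where "A = adjacency_matrix E"
  have symA: "transpose A = A" unfolding A_def using adj_sym[OF assms(1)] .
  have nn: "\<And>i j. A $ i $ j \<ge> 0" unfolding A_def by (rule adj_nonneg)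
  obtain g :: "'n \<Rightarrow> real^'n" and \<alpha> where n1: "\<And>i. norm (g i) = 1"
    and orth: "\<And>i j. i \<noteq> j \<Longrightarrow> g i \<bullet> g j = 0" and eig: "\<And>i. A *v g i = \<alpha> i *\<^sub>R g i"
    using spectral[OF symA] by metis
  note ctx = symA n1 orth eig
  have cp: "charpoly A = (\<Prod>i\<in>UNIV. [:- \<alpha> i, 1:])" by (rule charpoly_eig[OF n1 orth eig])
  obtain xs :: "'n list" where xs: "distinct xs" "set xs = UNIV"
    using finite_distinct_list[of "UNIV :: 'n set"] by auto
  define ls where "ls = eigvals_desc A"
  have ls_eq: "ls = rev (sort (map \<alpha> xs))" unfolding ls_def by (rule eigvals_desc_char[OF cp xs])
  have c2: "CARD('n) \<ge> 2" using assms(2) by simp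
  obtain i1 i2 where i12: "i1 \<noteq> i2" and a1: "\<alpha> i1 = ls ! 0" and a2: "\<alpha> i2 = ls ! 1"
    and top: "\<And>j. \<alpha> j \<le> ls ! 0" and sec: "\<And>j. j \<noteq> i1 \<Longrightarrow> \<alpha> j \<le> ls ! 1"
    using eig_order[OF xs ls_eq c2] by metis
  have gg: "g i \<bullet> g j = (if i = j then 1 else 0)" for i j by (rule gg[OF ctx])
  obtain p where Ap: "A *v p = (ls ! 0) *\<^sub>R p" and p1: "p \<bullet> vec 1 > 0"
    using perron[where A=A and g=g and \<alpha>=\<alpha> and L="ls ! 0" and ?i1.0=i1, OF symA n1 orth eig nn top a1] by blast
  have subV: "subspace {v. A *v v = c *\<^sub>R v}" for c
    unfolding subspace_def
    by (auto simp: matrix_vector_right_distrib matrix_vector_mult_scaleR scaleR_right_distrib)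
  have sub1: "subspace {v :: real^'n. v \<bullet> vec 1 = 0}"
    unfolding subspace_def by (auto simp: inner_add_left)
  have l01: "ls ! 1 \<le> ls ! 0" using top a2 by metis
  have claim2: "ls ! 0 = ls ! 1 \<longrightarrow> (\<exists>B. independent B \<and> span B = {v. A *v v = (ls ! 1) *\<^sub>R v} \<and>
                card {b \<in> B. b \<bullet> vec 1 \<noteq> 0} = 1)"
  proof
    assume eq: "ls ! 0 = ls ! 1"
    define V where "V = {v. A *v v = (ls ! 1) *\<^sub>R v}"
    define W where "W = V \<inter> {v. v \<bullet> vec 1 = 0}"
    have sV: "subspace V" unfolding V_def by (rule subV)
    have sW: "subspace W" unfolding W_def using sV sub1 by (rule subspace_inter)
    have pV: "p \<in> V" unfolding V_def using Ap eq by simp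
    obtain B' where B': "B' \<subseteq> W" "independent B'" "W \<subseteq> span B'" "card B' = dim W"
      by (rule basis_exists)
    have spB': "span B' = W" using span_subspace[OF B'(1) B'(3) sW] .
    have pnB: "p \<notin> span B'"
    proof
      assume "p \<in> span B'"
      then have "p \<bullet> vec 1 = 0" using spB' unfolding W_def by blast
      then show False using p1 by simp
    qed
    define B where "B = insert p B'"
    have indB: "independent B" unfolding B_def using B'(2) pnB
      by (simp add: independent_insert)
    have BV: "B \<subseteq> V" unfolding B_def using pV B'(1) unfolding W_def by blast
    have spB: "span B = V"
    proof
      show "span B \<subseteq> V" using span_minimal[OF BV sV] .
      show "V \<subseteq> span B"
      proof
        fix v assume vV: "v \<in> V"
        define t where "t = (v \<bullet> vec 1) / (p \<bullet> vec 1)"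
        have "v - t *\<^sub>R p \<in> V" using vV pV sV by (simp add: subspace_diff subspace_scale)
        moreover have "(v - t *\<^sub>R p) \<bullet> vec 1 = 0" unfolding t_def using p1 by (simp add: inner_diff_left)
        ultimately have "v - t *\<^sub>R p \<in> span B'" using spB' unfolding W_def by simp
        then have "\<exists>t. v - t *\<^sub>R p \<in> span B'" by blast
        then show "v \<in> span B" unfolding B_def by (simp only: span_breakdown_eq)
      qed
    qed
    have "{b \<in> B. b \<bullet> vec 1 \<noteq> 0} = {p}" unfolding B_def using p1 B'(1) unfolding W_def by auto
    then have "card {b \<in> B. b \<bullet> vec 1 \<noteq> 0} = 1" by simp
    then show "\<exists>B. independent B \<and> span B = {v. A *v v = (ls ! 1) *\<^sub>R v} \<and>
                card {b \<in> B. b \<bullet> vec 1 \<noteq> 0} = 1" using indB spB unfolding V_def by blast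
  qed
  have claim1: "ls ! 0 > ls ! 1 \<longrightarrow> (\<forall>v. A *v v = (ls ! 1) *\<^sub>R v \<longrightarrow> v \<bullet> vec 1 = 0)"
  proof (intro impI allI)
    assume gt: "ls ! 0 > ls ! 1"
    fix v assume Av: "A *v v = (ls ! 1) *\<^sub>R v"
    define \<mu> where "\<mu> = 1 / (k\<^sup>2 - 1)"
    have Bv: "Bbar k E *v w = \<mu> *\<^sub>R w - A *v w" for w
      unfolding Bbar_def A_def \<mu>_def
      by (simp add: matrix_vector_mult_diff_rdistrib scaleR_matrix_vector_assoc[symmetric])
    have H4: "w \<bullet> (A *v w) \<le> \<mu> * (w \<bullet> w)" if "w \<bullet> vec 1 = 0" for w
    proof -
      have "0 \<le> w \<bullet> (Bbar k E *v w)" using assms(4) that by blast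
      then show ?thesis using Bv[of w] by (simp add: inner_diff_right)
    qed
    have topsp: "y = (g i1 \<bullet> y) *\<^sub>R g i1" if "A *v y = (ls ! 0) *\<^sub>R y" for y
    proof (rule coeff_eq[OF ctx])
      fix j
      show "g j \<bullet> y = g j \<bullet> ((g i1 \<bullet> y) *\<^sub>R g i1)"
      proof (cases "j = i1")
        case True then show ?thesis using gg by simp
      next
        case False
        have "(\<alpha> j - ls ! 0) * (g j \<bullet> y) = 0" by (rule eigcoef[OF ctx that])
        moreover have "\<alpha> j - ls ! 0 \<noteq> 0" using sec[OF False] gt by simp
        ultimately show ?thesis using gg False by simp
      qed
    qed
    have "\<exists>u. u \<noteq> 0 \<and> Bbar k E *v u = 0"
      using assms(6) by (simp add: det_eq_0_rank matrix_nonfull_linear_equations_eq)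
    then obtain u where u: "u \<noteq> 0" "Bbar k E *v u = 0" by blast
    have Au: "A *v u = \<mu> *\<^sub>R u" using u(2) Bv[of u] by simp
    obtain j where aj: "\<alpha> j = \<mu>"
    proof (rule ccontr)
      assume "\<not> thesis"
      then have ne: "\<alpha> j \<noteq> \<mu>" for j using that by blast
      have "u = 0"
      proof (rule coeff_eq[OF ctx])
        fix i
        have "(\<alpha> i - \<mu>) * (g i \<bullet> u) = 0" by (rule eigcoef[OF ctx Au])
        then show "g i \<bullet> u = g i \<bullet> 0" using ne[of i] by simp
      qed
      then show False using u(1) by simp
    qed
    have l2mu: "ls ! 1 \<le> \<mu>"
    proof (cases "g i2 \<bullet> vec 1 = 0 \<and> g i1 \<bullet> vec 1 = 0")
      case True
      have "g i1 \<bullet> (A *v g i1) \<le> \<mu> * (g i1 \<bullet> g i1)" using H4 True by blast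
      then have "ls ! 0 \<le> \<mu>" using eig[of i1] a1 gg[of i1 i1] by simp
      then show ?thesis using l01 by simp
    next
      case False
      define a where "a = g i2 \<bullet> vec 1"
      define b where "b = g i1 \<bullet> vec 1"
      define z where "z = a *\<^sub>R g i1 - b *\<^sub>R g i2"
      have z1: "z \<bullet> vec 1 = 0" unfolding z_def a_def b_def by (simp add: inner_diff_left)
      have g21: "g i2 \<bullet> g i1 = 0" "g i1 \<bullet> g i2 = 0" using gg i12 by auto
      have g11: "g i1 \<bullet> g i1 = 1" "g i2 \<bullet> g i2 = 1" using gg by auto
      have zAz: "z \<bullet> (A *v z) = a\<^sup>2 * ls ! 0 + b\<^sup>2 * ls ! 1"
        unfolding z_def using eig[of i1] eig[of i2] a1 a2 g21 g11
        by (simp add: matrix_vector_mult_diff_distrib matrix_vector_mult_scaleR inner_diff_left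
            inner_diff_right power2_eq_square)
      have zz: "z \<bullet> z = a\<^sup>2 + b\<^sup>2"
        unfolding z_def using g21 g11
        by (simp add: inner_diff_left inner_diff_right power2_eq_square)
      have "a \<noteq> 0 \<or> b \<noteq> 0" using False unfolding a_def b_def by auto
      then have pos: "a\<^sup>2 + b\<^sup>2 > 0" by (simp add: sum_power2_gt_zero_iff)
      have "a\<^sup>2 * ls ! 0 + b\<^sup>2 * ls ! 1 \<le> \<mu> * (a\<^sup>2 + b\<^sup>2)" using H4[OF z1] zAz zz by simp
      moreover have "ls ! 1 * (a\<^sup>2 + b\<^sup>2) \<le> a\<^sup>2 * ls ! 0 + b\<^sup>2 * ls ! 1"
        using mult_right_mono[OF l01, of "a\<^sup>2"] by (simp add: algebra_simps)
      ultimately have "ls ! 1 * (a\<^sup>2 + b\<^sup>2) \<le> \<mu> * (a\<^sup>2 + b\<^sup>2)" by simp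
      then show ?thesis using pos by simp
    qed
    have pspan: "p = (g i1 \<bullet> p) *\<^sub>R g i1" by (rule topsp[OF Ap])
    have gi1_1: "g i1 \<bullet> vec 1 \<noteq> 0"
    proof
      assume "g i1 \<bullet> vec 1 = 0"
      then have "p \<bullet> vec 1 = 0" by (subst pspan) simp
      then show False using p1 by simp
    qed
    show "v \<bullet> vec 1 = 0"
    proof (cases "j = i1")
      case True
      then have mu0: "\<mu> = ls ! 0" using aj a1 by simp
      obtain w \<gamma> where w: "w \<noteq> 0" "w \<bullet> vec 1 = 0" "Bbar k E *v w = \<gamma> *\<^sub>R vec 1"
        using assms(5) by blast
      have "w \<bullet> (Bbar k E *v w) = 0" using w by simp
      then have wq: "w \<bullet> (A *v w) = (ls ! 0) * (w \<bullet> w)" using Bv[of w] mu0 by (simp add: inner_diff_right)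
      have "A *v w = (ls ! 0) *\<^sub>R w" by (rule rayleigh_eq[OF ctx top wq])
      then have wsp: "w = (g i1 \<bullet> w) *\<^sub>R g i1" by (rule topsp)
      then have "(g i1 \<bullet> w) * (g i1 \<bullet> vec 1) = 0" using w(2) by (metis inner_scaleR_left)
      then have "g i1 \<bullet> w = 0" using gi1_1 by simp
      then have "w = 0" using wsp by simp
      then show ?thesis using w(1) by simp
    next
      case False
      then have mu1: "\<mu> = ls ! 1" using aj sec[OF False] l2mu by simp
      show ?thesis
      proof (rule ccontr)
        assume v1: "v \<bullet> vec 1 \<noteq> 0"
        have "(\<alpha> i1 - ls ! 1) * (g i1 \<bullet> v) = 0" by (rule eigcoef[OF ctx Av])
        then have "g i1 \<bullet> v = 0" using a1 gt by simp
        then have pv: "p \<bullet> v = 0" by (subst pspan) simp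
        then have vp: "v \<bullet> p = 0" by (simp add: inner_commute)
        define s where "s = v \<bullet> vec 1"
        define r where "r = p \<bullet> vec 1"
        define z where "z = s *\<^sub>R p - r *\<^sub>R v"
        have z1: "z \<bullet> vec 1 = 0" unfolding z_def s_def r_def by (simp add: inner_diff_left)
        have zAz: "z \<bullet> (A *v z) = s\<^sup>2 * ls ! 0 * (p \<bullet> p) + r\<^sup>2 * ls ! 1 * (v \<bullet> v)"
          unfolding z_def using Ap Av pv vp
          by (simp add: matrix_vector_mult_diff_distrib matrix_vector_mult_scaleR inner_diff_left
              inner_diff_right power2_eq_square algebra_simps)
        have zz: "z \<bullet> z = s\<^sup>2 * (p \<bullet> p) + r\<^sup>2 * (v \<bullet> v)"
          unfolding z_def using pv vp
          by (simp add: inner_diff_left inner_diff_right power2_eq_square algebra_simps)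
        have "s\<^sup>2 * ls ! 0 * (p \<bullet> p) + r\<^sup>2 * ls ! 1 * (v \<bullet> v) \<le> ls ! 1 * (s\<^sup>2 * (p \<bullet> p) + r\<^sup>2 * (v \<bullet> v))"
          using H4[OF z1] zAz zz mu1 by simp
        then have le0: "s\<^sup>2 * (p \<bullet> p) * (ls ! 0 - ls ! 1) \<le> 0" by (simp add: algebra_simps)
        have "p \<noteq> 0" using p1 by auto
        then have "p \<bullet> p > 0" by simp
        moreover have "s\<^sup>2 > 0" using v1 unfolding s_def by simp
        ultimately have "s\<^sup>2 * (p \<bullet> p) * (ls ! 0 - ls ! 1) > 0" using gt by simp
        then show False using le0 by simp
      qed
    qed
  qed
  show ?thesis using claim1 claim2 unfolding A_def ls_def by blast
qed

end
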